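(* Let $q\ge2$, $z\in\{1,\dots,q-1\}$, $\varepsilon>0$ sufficiently small (depending on $q$), $n$ a positive integer, $v$ a string over $\{1,\dots,q\}$, and $r_1>r_2>\dots>r_k$ positive integers with $r_j\ge r_{j+1}/\varepsilon^4$, such that $l_j=\varepsilon^2 r_j$ are integers, $l_1\mid|v|$, $l_{j+1}\mid l_j$, and $\mathrm{adv}^{q,z}(v,A^q_{r_j,n})\ge\varepsilon/q$ for all $j$. Let $v_0=v$ and for $j=1,\dots,k$ let $v_j$ be chosen uniformly at random among the consecutive non-overlapping length-$l_j$ substrings into which $v_{j-1}$ is split. Let $F^p_j=\mathrm{count}_p(v_j)/|v_j|$ for $p\in\{1,\dots,q\}$ and $f_j=\sum_{p=1}^q\mathrm{Var}(F^p_j)$. Then $f_{i+1}\ge f_i+\Omega(\varepsilon^2/q^4)$ for all $1\le i<k$ (with an absolute implied constant).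
   Context: $\mathrm{count}_p(w)$ is the number of occurrences of symbol $p$ in $w$. A matching $M$ between strings $a,b$ is a pair of increasing index sequences in $a$ and $b$ of equal length $|M|$ matching equal symbols. $\mathrm{adv}^{q,z}_M(a,b)=\frac{(2z+1)|M|-|a|-\frac{z+z^2}{q}|b|}{|a|}$, $\mathrm{adv}^{q,z}(a,b)=\max_M\mathrm{adv}^{q,z}_M(a,b)$, and for infinite $b$, $\mathrm{adv}^{q,z}(a,b)$ is the maximum over finite substrings $b'$ of $b$ of $\mathrm{adv}^{q,z}(a,b')$. $A^q_r=(1^r2^r\cdots q^r)^\infty$ and $A^q_{r,n}$ is its prefix of length $n$. *)

theory Defs
  imports "HOL-Probability.Probability"
begin

text \<open>Strings over the alphabet {1..q} are lists of naturals; positions are 0-indexed.\<close>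

definition count_sym :: "nat \<Rightarrow> nat list \<Rightarrow> nat" where
  "count_sym p w = count_list w p"

definition is_matching :: "nat list \<Rightarrow> nat list \<Rightarrow> nat list \<times> nat list \<Rightarrow> bool" where
  "is_matching a b M \<longleftrightarrow>
     (let is = fst M; js = snd M in
       length is = length js \<and> sorted_wrt (<) is \<and> sorted_wrt (<) js \<and>
       (\<forall>i\<in>set is. i < length a) \<and> (\<forall>j\<in>set js. j < length b) \<and>
       (\<forall>t<length is. a ! (is ! t) = b ! (js ! t)))"

definition matching_size :: "nat list \<times> nat list \<Rightarrow> nat" where
  "matching_size M = length (fst M)"

definition adv_M :: "nat \<Rightarrow> nat \<Rightarrow> nat list \<times> nat list \<Rightarrow> nat list \<Rightarrow> nat list \<Rightarrow> real" where
  "adv_M q z M a b =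
     ((2 * real z + 1) * real (matching_size M) - real (length a)
       - (real z + real z ^ 2) / real q * real (length b)) / real (length a)"

definition adv :: "nat \<Rightarrow> nat \<Rightarrow> nat list \<Rightarrow> nat list \<Rightarrow> real" where
  "adv q z a b = Max ((\<lambda>M. adv_M q z M a b) ` {M. is_matching a b M})"

text \<open>A^q_r = (1^r 2^r ... q^r)^\<infinity> and its prefix of length n.\<close>
definition A_inf :: "nat \<Rightarrow> nat \<Rightarrow> nat \<Rightarrow> nat" where
  "A_inf q r i = (i div r) mod q + 1"

definition A_pref :: "nat \<Rightarrow> nat \<Rightarrow> nat \<Rightarrow> nat list" where
  "A_pref q r n = map (A_inf q r) [0..<n]"

text \<open>Choose uniformly at random one of the consecutive non-overlapping length-l substrings
  into which u is split (uniform over positions, so equal blocks are counted with multiplicity).\<close>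
definition split_pmf :: "nat \<Rightarrow> nat list \<Rightarrow> nat list pmf" where
  "split_pmf l u = map_pmf (\<lambda>t. take l (drop (t * l) u)) (pmf_of_set {0..<length u div l})"

primrec walk :: "(nat \<Rightarrow> nat) \<Rightarrow> nat list \<Rightarrow> nat \<Rightarrow> nat list pmf" where
  "walk l v 0 = return_pmf v"
| "walk l v (Suc j) = bind_pmf (walk l v j) (split_pmf (l (Suc j)))"

definition freq :: "nat \<Rightarrow> nat list \<Rightarrow> real" where
  "freq p w = real (count_sym p w) / real (length w)"

definition fvar :: "nat \<Rightarrow> (nat \<Rightarrow> nat) \<Rightarrow> nat list \<Rightarrow> nat \<Rightarrow> real" where
  "fvar q l v j = (\<Sum>p=1..q. measure_pmf.variance (walk l v j) (freq p))"

end

theory Submission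
  imports Defs
begin

definition blk :: "nat \<Rightarrow> nat list \<Rightarrow> nat \<Rightarrow> nat list" where
  "blk l v t = take l (drop (t*l) v)"

definition cnt :: "nat list \<Rightarrow> nat \<Rightarrow> nat \<Rightarrow> nat \<Rightarrow> real" where
  "cnt v p a len = (\<Sum>i<len. if v ! (a+i) = p then 1 else 0)"

lemma count_list_sum: "count_list xs p = (\<Sum>i<length xs. if xs!i = p then 1 else (0::nat))"
  by (induction xs) (simp_all del: sum.lessThan_Suc add: sum.lessThan_Suc_shift)

lemma shift_sum: "sum g {a..<a+K} = (\<Sum>b<K. g (a+b))" for g :: "nat \<Rightarrow> 'a::comm_monoid_add"
  using sum.atLeastLessThan_shift_0[of g a "a+K"] by (simp add: atLeast0LessThan comp_def)

lemma sum_group: "(\<Sum>x<N*K. g x) = (\<Sum>a<N. \<Sum>b<K. g (a*K+b))" for g :: "nat \<Rightarrow> 'a::comm_monoid_add"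
proof -
  have "(\<Sum>x<N*K. g x) = (\<Sum>a<N. sum g {a*K..<a*K+K})"
    by (rule sum.nat_group[symmetric])
  also have "\<dots> = (\<Sum>a<N. \<Sum>b<K. g (a*K+b))"
    by (simp add: shift_sum)
  finally show ?thesis .
qed

lemma length_blk: "(t+1)*l \<le> length v \<Longrightarrow> length (blk l v t) = l"
  by (simp add: blk_def)

lemma freq_blk: assumes "(t+1)*l \<le> length v" "0 < l"
  shows "freq p (blk l v t) = cnt v p (t*l) l / l"
proof -
  have "real (count_sym p (blk l v t)) = cnt v p (t*l) l"
    using assms unfolding count_sym_def count_list_sum cnt_def
    by (simp add: length_blk blk_def) (intro sum.cong, auto)
  then show ?thesis using assms by (simp add: freq_def length_blk)
qed

lemma blk_blk: assumes "l = K*l'" "t' < K"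
  shows "blk l' (blk l v t) t' = blk l' v (t*K+t')"
proof -
  have "t'*l' + l' \<le> l" using assms
    by (metis Suc_leI add.commute mult.commute mult_Suc_right mult_le_mono2)
  then have m: "min l' (l - t'*l') = l'" by simp
  have e: "t*l + t'*l' = (t*K+t')*l'" using assms by (simp add: algebra_simps)
  show ?thesis unfolding blk_def
    by (simp add: drop_take take_take m e add.commute)
qed

lemma pair_uniform: assumes "finite A" "A \<noteq> {}" "finite B" "B \<noteq> {}"
  shows "pair_pmf (pmf_of_set A) (pmf_of_set B) = pmf_of_set (A \<times> B)"
proof (rule pmf_eqI)
  fix x :: "'a \<times> 'b" obtain a b where x: "x = (a,b)" by fastforce
  show "pmf (pair_pmf (pmf_of_set A) (pmf_of_set B)) x = pmf (pmf_of_set (A \<times> B)) x"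
    using assms by (simp add: x pmf_pair card_cartesian_product indicator_def)
qed

lemma map_pair: "map_pmf h (pair_pmf P Q) = bind_pmf P (\<lambda>x. map_pmf (\<lambda>y. h (x,y)) Q)"
  by (simp add: pair_pmf_def map_bind_pmf map_pmf_def bind_assoc_pmf bind_return_pmf)

lemma uniform_split: fixes N K :: nat assumes "0 < N" "0 < K"
  shows "bind_pmf (pmf_of_set {..<N}) (\<lambda>t. map_pmf (\<lambda>t'. g (t*K+t')) (pmf_of_set {..<K}))
       = map_pmf g (pmf_of_set {..<N*K})"
proof -
  have inj: "inj_on (\<lambda>(t,t'). t*K+t') ({..<N} \<times> {..<K})"
  proof (rule inj_onI, clarsimp)
    fix a b c d :: nat assume "a < N" "b < K" "c < N" "d < K" "a*K+b = c*K+d"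
    moreover have "(a*K+b) div K = a" "(c*K+d) div K = c" "(a*K+b) mod K = b" "(c*K+d) mod K = d"
      using \<open>b<K\<close> \<open>d<K\<close> by simp_all
    ultimately show "a = c \<and> b = d" by metis
  qed
  have img: "(\<lambda>(t,t'). t*K+t') ` ({..<N} \<times> {..<K}) = {..<N*K}"
  proof
    show "(\<lambda>(t,t'). t*K+t') ` ({..<N} \<times> {..<K}) \<subseteq> {..<N*K}"
    proof clarsimp
      fix a b assume "a < N" "b < K"
      then have "a*K+b < (a+1)*K" by simp
      also have "\<dots> \<le> N*K" using \<open>a<N\<close> by (intro mult_le_mono1) simp
      finally show "a*K+b < N*K" .
    qed
    show "{..<N*K} \<subseteq> (\<lambda>(t,t'). t*K+t') ` ({..<N} \<times> {..<K})"
    proof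
      fix x assume "x \<in> {..<N*K}"
      then have "x div K < N" "x mod K < K" "x = (x div K)*K + x mod K" using assms
        by (auto simp: less_mult_imp_div_less)
      then show "x \<in> (\<lambda>(t,t'). t*K+t') ` ({..<N} \<times> {..<K})"
        by (metis (no_types, lifting) SigmaI case_prod_conv image_eqI lessThan_iff)
    qed
  qed
  have "bind_pmf (pmf_of_set {..<N}) (\<lambda>t. map_pmf (\<lambda>t'. g (t*K+t')) (pmf_of_set {..<K}))
      = map_pmf g (map_pmf (\<lambda>(t,t'). t*K+t') (pair_pmf (pmf_of_set {..<N}) (pmf_of_set {..<K})))"
    by (simp add: map_pair map_pmf_comp map_bind_pmf)
  also have "\<dots> = map_pmf g (pmf_of_set {..<N*K})"
  proof -
    have "pair_pmf (pmf_of_set {..<N}) (pmf_of_set {..<K}) = pmf_of_set ({..<N} \<times> {..<K})"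
      using assms by (intro pair_uniform) auto
    moreover have "map_pmf (\<lambda>(t,t'). t*K+t') (pmf_of_set ({..<N} \<times> {..<K})) = pmf_of_set {..<N*K}"
      using assms by (subst map_pmf_of_set_inj[OF inj]) (auto simp: img)
    ultimately show ?thesis by simp
  qed
  finally show ?thesis .
qed


lemma walk_eq:
  assumes l1: "l 1 dvd length v" and chain: "\<forall>j. 1 \<le> j \<and> j < k \<longrightarrow> l (Suc j) dvd l j"
    and pos: "\<forall>j\<in>{1..k}. 0 < l j" and mpos: "0 < length v"
  shows "1 \<le> j \<Longrightarrow> j \<le> k \<Longrightarrow> l j dvd length v \<and>
           walk l v j = map_pmf (blk (l j) v) (pmf_of_set {..<length v div l j})"
proof (induction j)
  case 0 thus ?case by simp
next
  case (Suc j)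
  show ?case
  proof (cases "j = 0")
    case True
    then show ?thesis using l1 by (simp add: split_pmf_def blk_def atLeast0LessThan bind_return_pmf)
  next
    case False
    then have IH: "l j dvd length v" "walk l v j = map_pmf (blk (l j) v) (pmf_of_set {..<length v div l j})"
      using Suc by auto
    have d: "l (Suc j) dvd l j" using chain Suc.prems False by auto
    define L where "L = l j"
    define l' where "l' = l (Suc j)"
    define N where "N = length v div L"
    define K where "K = L div l'"
    have lpos: "0 < L" "0 < l'" using pos Suc.prems False by (auto simp: L_def l'_def)
    have LK: "L = K * l'" using d by (simp add: K_def L_def l'_def)
    have mN: "length v = N * L" using IH(1) by (simp add: N_def L_def)
    have Npos: "0 < N" using mpos mN by (cases N) auto
    have Kpos: "0 < K" using lpos LK by (cases K) auto
    have dv: "l' dvd length v" using d IH(1) dvd_trans by (auto simp: l'_def)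
    have NK: "N*K = length v div l'" using mN LK lpos by simp
    have "walk l v (Suc j) = bind_pmf (pmf_of_set {..<N}) (\<lambda>t. split_pmf l' (blk L v t))"
      by (simp add: IH(2) bind_map_pmf L_def l'_def N_def)
    also have "\<dots> = bind_pmf (pmf_of_set {..<N}) (\<lambda>t. map_pmf (\<lambda>t'. blk l' v (t*K+t')) (pmf_of_set {..<K}))"
    proof (rule bind_pmf_cong[OF refl])
      fix t assume "t \<in> set_pmf (pmf_of_set {..<N})"
      then have t: "t < N" using Npos by (subst (asm) set_pmf_of_set) auto
      have "(t+1)*L \<le> length v" using t mN by (simp add: mult_le_mono1 del: mult_Suc)
      then have len: "length (blk L v t) = L" by (rule length_blk)
      have "split_pmf l' (blk L v t) = map_pmf (\<lambda>t'. blk l' (blk L v t) t') (pmf_of_set {..<K})"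
        unfolding split_pmf_def using len by (simp add: atLeast0LessThan blk_def K_def)
      also have "\<dots> = map_pmf (\<lambda>t'. blk l' v (t*K+t')) (pmf_of_set {..<K})"
      proof (intro map_pmf_cong refl)
        fix x assume "x \<in> set_pmf (pmf_of_set {..<K})"
        then have "x < K" using Kpos by (subst (asm) set_pmf_of_set) auto
        then show "blk l' (blk L v t) x = blk l' v (t * K + x)" by (rule blk_blk[OF LK])
      qed
      finally show "split_pmf l' (blk L v t) = map_pmf (\<lambda>t'. blk l' v (t*K+t')) (pmf_of_set {..<K})" .
    qed
    also have "\<dots> = map_pmf (blk l' v) (pmf_of_set {..<N*K})" by (rule uniform_split[OF Npos Kpos])
    finally show ?thesis using dv NK by (simp add: l'_def)
  qed
qed

lemma exp_walk:
  assumes l1: "l 1 dvd length v" and chain: "\<forall>j. 1 \<le> j \<and> j < k \<longrightarrow> l (Suc j) dvd l j"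
    and pos: "\<forall>j\<in>{1..k}. 0 < l j" and mpos: "0 < length v" and j: "1 \<le> j" "j \<le> k"
  shows "measure_pmf.expectation (walk l v j) h =
     (\<Sum>t<length v div l j. h (blk (l j) v t)) / real (length v div l j)"
proof -
  have w: "l j dvd length v" "walk l v j = map_pmf (blk (l j) v) (pmf_of_set {..<length v div l j})"
    using walk_eq[OF assms(1-4) j] by auto
  have "0 < length v div l j" using w(1) mpos pos j
    by (metis Suc_le_eq atLeastAtMost_iff bot_nat_0.not_eq_extremum div_greater_zero_iff dvd_imp_le)
  then show ?thesis using w(2) by (simp, subst integral_pmf_of_set) auto
qed

lemma cnt_group: "cnt v p a (K*l) = (\<Sum>b<K. cnt v p (a + b*l) l)"
  unfolding cnt_def by (subst sum_group) (simp add: add.assoc)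

lemma sq_split:
  fixes G :: "nat \<Rightarrow> real"
  assumes "(\<Sum>b<K. G b) = real K * c"
  shows "(\<Sum>b<K. (G b - \<mu>)\<^sup>2) = (\<Sum>b<K. (G b - c)\<^sup>2) + real K * (c - \<mu>)\<^sup>2"
proof -
  have "(\<Sum>b<K. (G b - \<mu>)\<^sup>2) = (\<Sum>b<K. (G b - c)\<^sup>2 + 2*(c-\<mu>)*G b - 2*(c-\<mu>)*c + (c-\<mu>)\<^sup>2)"
    by (intro sum.cong) (auto simp: power2_eq_square algebra_simps)
  also have "\<dots> = (\<Sum>b<K. (G b - c)\<^sup>2) + 2*(c-\<mu>)*(\<Sum>b<K. G b) - real K*(2*(c-\<mu>)*c) + real K * (c-\<mu>)\<^sup>2"
    by (simp add: sum.distrib sum_subtractf sum_distrib_left)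
  also have "\<dots> = (\<Sum>b<K. (G b - c)\<^sup>2) + real K * (c - \<mu>)\<^sup>2"
    using assms by (simp add: algebra_simps)
  finally show ?thesis .
qed


definition Fr :: "nat list \<Rightarrow> nat \<Rightarrow> nat \<Rightarrow> nat \<Rightarrow> real" where
  "Fr v p ll t = cnt v p (t*ll) ll / ll"

lemma fvar_formula:
  assumes l1: "l 1 dvd length v" and chain: "\<forall>j. 1 \<le> j \<and> j < k \<longrightarrow> l (Suc j) dvd l j"
    and pos: "\<forall>j\<in>{1..k}. 0 < l j" and mpos: "0 < length v" and j: "1 \<le> j" "j \<le> k"
  shows "fvar q l v j = (\<Sum>p=1..q. (\<Sum>t<length v div l j.
            (Fr v p (l j) t - cnt v p 0 (length v) / length v)\<^sup>2) / real (length v div l j))"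
proof -
  define ll where "ll = l j"
  define N where "N = length v div ll"
  have w: "ll dvd length v" using walk_eq[OF assms(1-4) j] by (auto simp: ll_def)
  have llpos: "0 < ll" using pos j by (auto simp: ll_def)
  have mN: "length v = N * ll" using w by (simp add: N_def)
  have Npos: "0 < N" using mpos mN by (cases N) auto
  have fb: "freq p (blk ll v t) = Fr v p ll t" if "t < N" for p t
  proof -
    have "(t+1)*ll \<le> length v" using that mN by (simp add: mult_le_mono1 del: mult_Suc)
    then show ?thesis using freq_blk[OF _ llpos] by (simp add: Fr_def)
  qed
  have mean: "measure_pmf.expectation (walk l v j) (freq p) = cnt v p 0 (length v) / length v" for p
  proof -
    have "measure_pmf.expectation (walk l v j) (freq p) = (\<Sum>t<N. Fr v p ll t) / N"
      using exp_walk[OF assms] fb by (simp add: N_def ll_def)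
    also have "(\<Sum>t<N. Fr v p ll t) = cnt v p 0 (N*ll) / ll"
      by (simp add: Fr_def cnt_group[of v p 0 N ll] sum_divide_distrib)
    finally show ?thesis using mN Npos llpos by (simp add: field_simps)
  qed
  show ?thesis unfolding fvar_def
  proof (intro sum.cong refl)
    fix p
    show "measure_pmf.variance (walk l v j) (freq p) =
       (\<Sum>t<length v div l j. (Fr v p (l j) t - cnt v p 0 (length v) / real (length v))\<^sup>2) / real (length v div l j)"
      unfolding mean using exp_walk[OF assms] fb by (simp add: N_def ll_def)
  qed
qed

lemma var_diff:
  assumes "length v = N*L" "L = K*ll" "0<N" "0<K" "0<ll"
  shows "(\<Sum>t<N*K. (Fr v p ll t - \<mu>)\<^sup>2)/real(N*K) - (\<Sum>t<N. (Fr v p L t - \<mu>)\<^sup>2)/real N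
       = (\<Sum>b<N*K. (Fr v p ll b - Fr v p L (b div K))\<^sup>2)/real(N*K)"
proof -
  have s: "(\<Sum>b<K. Fr v p ll (B*K+b)) = real K * Fr v p L B" for B
  proof -
    have "real K * Fr v p L B = cnt v p (B*L) (K*ll) / ll"
      using assms by (simp add: Fr_def field_simps)
    also have "\<dots> = (\<Sum>b<K. Fr v p ll (B*K+b))"
      unfolding cnt_group Fr_def using assms by (simp add: sum_divide_distrib algebra_simps)
    finally show ?thesis by simp
  qed
  have g: "(\<Sum>t<N*K. (Fr v p ll t - \<mu>)\<^sup>2) = (\<Sum>B<N. \<Sum>b<K. (Fr v p ll (B*K+b) - \<mu>)\<^sup>2)"
    by (rule sum_group)
  have g2: "(\<Sum>b<N*K. (Fr v p ll b - Fr v p L (b div K))\<^sup>2) = (\<Sum>B<N. \<Sum>b<K. (Fr v p ll (B*K+b) - Fr v p L B)\<^sup>2)"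
    by (subst sum_group) (intro sum.cong refl, simp)
  have "(\<Sum>t<N*K. (Fr v p ll t - \<mu>)\<^sup>2) = (\<Sum>B<N. (\<Sum>b<K. (Fr v p ll (B*K+b) - Fr v p L B)\<^sup>2) + real K * (Fr v p L B - \<mu>)\<^sup>2)"
    unfolding g by (intro sum.cong refl sq_split s)
  also have "\<dots> = (\<Sum>b<N*K. (Fr v p ll b - Fr v p L (b div K))\<^sup>2) + real K * (\<Sum>t<N. (Fr v p L t - \<mu>)\<^sup>2)"
    unfolding g2 by (simp add: sum.distrib sum_distrib_left)
  finally show ?thesis using assms by (simp add: field_simps)
qed


definition nx :: "nat list \<Rightarrow> nat \<Rightarrow> nat" where
  "nx xs y = (if \<exists>t<length xs. y \<le> xs!t then (LEAST t. t < length xs \<and> y \<le> xs!t) else length xs - 1)"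

lemma sorted_nth_mono: fixes xs :: "nat list" shows "sorted_wrt (<) xs \<Longrightarrow> t \<le> t' \<Longrightarrow> t' < length xs \<Longrightarrow> xs!t \<le> xs!t'"
  using sorted_wrt_iff_nth_less[of "(<)" xs] by (cases "t = t'") (auto intro: less_imp_le)

lemma nx_lt: fixes xs :: "nat list" shows "0 < length xs \<Longrightarrow> nx xs y < length xs"
proof (cases "\<exists>t<length xs. y \<le> xs!t")
  case True
  then have "(LEAST t. t<length xs \<and> y \<le> xs!t) < length xs" by (rule LeastI2_ex) auto
  then show ?thesis using True by (simp add: nx_def)
qed (auto simp: nx_def)

lemma nx_nth: fixes xs :: "nat list" assumes "sorted_wrt (<) xs" "t < length xs" shows "nx xs (xs!t) = t"
proof -
  have ex: "\<exists>t'<length xs. xs!t \<le> xs!t'" using assms by auto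
  have "(LEAST t'. t' < length xs \<and> xs!t \<le> xs!t') = t"
  proof (rule Least_equality)
    show "t < length xs \<and> xs ! t \<le> xs ! t" using assms by simp
    fix y assume y: "y < length xs \<and> xs ! t \<le> xs ! y"
    show "t \<le> y"
    proof (rule ccontr)
      assume "\<not> t \<le> y" then have "xs!y < xs!t" using assms y
        by (simp add: sorted_wrt_iff_nth_less)
      then show False using y by simp
    qed
  qed
  then show ?thesis using ex by (simp add: nx_def)
qed

lemma nx_mono: fixes xs :: "nat list" assumes "0 < length xs" "y \<le> y'" shows "nx xs y \<le> nx xs y'"
proof (cases "\<exists>t<length xs. y' \<le> xs!t")
  case True
  then obtain t where t: "t<length xs" "y' \<le> xs!t" by auto
  have ex: "\<exists>t<length xs. y \<le> xs!t" using True assms by force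
  have "(LEAST t. t < length xs \<and> y \<le> xs!t) \<le> (LEAST t. t < length xs \<and> y' \<le> xs!t)"
    using True assms by (metis (mono_tags, lifting) LeastI_ex Least_le order_trans)
  then show ?thesis using True ex by (simp add: nx_def)
next
  case False
  then have "nx xs y' = length xs - 1" unfolding nx_def by (auto simp del: not_le)
  then show ?thesis using nx_lt[OF assms(1), of y] by simp
qed

lemma mono_nat_diff_ge1:
  fixes f :: "nat \<Rightarrow> nat"
  assumes "mono f" "f (a + d) \<noteq> f a"
  shows "1 \<le> real (f (a + Suc d)) - real (f a)"
proof -
  have "f a \<le> f (a+d)" "f (a+d) \<le> f (a + Suc d)" using assms(1) by (auto simp: mono_def)
  then show ?thesis using assms(2) by linarith
qed

lemma mono_const:
  fixes f :: "nat \<Rightarrow> nat"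
  assumes "mono f" "f (a + d) = f a" "y \<le> d"
  shows "f (a + y) = f a"
proof -
  have "f a \<le> f (a+y)" using assms(1) by (simp add: monoD)
  moreover have "f (a+y) \<le> f (a+d)" using assms(1,3) by (simp add: monoD)
  ultimately show ?thesis using assms(2) by linarith
qed


lemma theta_sum:
  fixes \<alpha> :: "nat \<Rightarrow> real" and z :: nat and S0 :: "nat set"
  assumes fin: "finite S0" and nn: "\<forall>s\<in>S0. \<alpha> s \<ge> 0" and tot: "(\<Sum>s\<in>S0. \<alpha> s) \<le> 1"
  shows "(2*real z+1) * (\<Sum>s\<in>S0. (if (2*real z+1) * \<alpha> s > 1 then 1 - 1/((2*real z+1) * \<alpha> s) else 0)) \<le> real z + real z ^ 2"
proof -
  define D where "D = 2*real z+1"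
  define S where "S = {s\<in>S0. D * \<alpha> s > 1}"
  define t where "t = real (card S)"
  have finS: "finite S" using fin by (simp add: S_def)
  have Dpos: "D > 0" by (simp add: D_def)
  have apos: "\<alpha> s > 0" if "s \<in> S" for s
  proof -
    have "\<alpha> s \<ge> 0" "D*\<alpha> s > 1" using that nn by (auto simp: S_def)
    then show "\<alpha> s > 0" by (cases "\<alpha> s = 0") auto
  qed
  have e1: "(\<Sum>s\<in>S0. (if D * \<alpha> s > 1 then 1 - 1/(D * \<alpha> s) else 0)) = (\<Sum>s\<in>S. 1 - 1/(D * \<alpha> s))"
    unfolding S_def using fin by (simp add: sum.inter_filter)
  have inv: "1/\<alpha> s \<ge> 2*t - t^2 * \<alpha> s" if "s \<in> S" for s
  proof -
    have a: "\<alpha> s > 0" using apos that by simp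
    have "0 \<le> (1 - t * \<alpha> s)^2" by simp
    then have "2*t*\<alpha> s - t^2*\<alpha> s^2 \<le> 1" by (simp add: power2_eq_square algebra_simps)
    then have "(2*t - t^2*\<alpha> s) * \<alpha> s \<le> 1" by (simp add: power2_eq_square algebra_simps)
    then show ?thesis using a by (simp add: field_simps)
  qed
  have A: "(\<Sum>s\<in>S. \<alpha> s) \<le> 1"
  proof -
    have "(\<Sum>s\<in>S. \<alpha> s) \<le> (\<Sum>s\<in>S0. \<alpha> s)" using fin nn by (intro sum_mono2) (auto simp: S_def)
    then show ?thesis using tot by simp
  qed
  have "D * (\<Sum>s\<in>S. 1 - 1/(D * \<alpha> s)) = D * t - (\<Sum>s\<in>S. 1/\<alpha> s)"
  proof -
    have "D * (\<Sum>s\<in>S. 1/(D * \<alpha> s)) = (\<Sum>s\<in>S. 1/\<alpha> s)"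
      using Dpos by (simp add: sum_distrib_left)
    then show ?thesis by (simp add: sum_subtractf right_diff_distrib t_def)
  qed
  also have "(\<Sum>s\<in>S. 1/\<alpha> s) \<ge> (\<Sum>s\<in>S. 2*t - t^2 * \<alpha> s)" by (intro sum_mono inv)
  then have "D * t - (\<Sum>s\<in>S. 1/\<alpha> s) \<le> D*t - (2*t*t - t^2 * (\<Sum>s\<in>S. \<alpha> s))"
    by (simp add: sum_subtractf sum_distrib_left t_def)
  also have "\<dots> \<le> D*t - t^2"
  proof -
    have "t^2 * (\<Sum>s\<in>S. \<alpha> s) \<le> t^2" using A by (simp add: mult_left_le)
    then show ?thesis by (simp add: power2_eq_square)
  qed
  also have "\<dots> \<le> real z + real z ^ 2"
  proof -
    have "0 \<le> (t - z) * (t - z - 1)"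
    proof (cases "card S \<le> z")
      case True then have "t - z \<le> 0" "t - z - 1 \<le> 0" by (auto simp: t_def)
      then show ?thesis by (simp add: mult_nonpos_nonpos)
    next
      case False then have "t - z \<ge> 0" "t - z - 1 \<ge> 0" by (auto simp: t_def)
      then show ?thesis by simp
    qed
    then show ?thesis by (simp add: D_def power2_eq_square algebra_simps)
  qed
  finally have X: "D * (\<Sum>s\<in>S. 1 - 1/(D * \<alpha> s)) \<le> real z + real z ^ 2" .
  show ?thesis unfolding D_def[symmetric] using X e1 by simp
qed


lemma real_div_le: "real (a div d) \<le> real a / real d"
proof (cases "d = 0")
  case False
  have "(a div d) * d \<le> a" by (metis div_mult_mod_eq le_add1)
  then have "real (a div d) * real d \<le> real a" by (metis of_nat_le_iff of_nat_mult)
  then show ?thesis using False by (simp add: field_simps)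
qed simp

lemma abs_le_rho: fixes x \<rho> :: real assumes "0 < \<rho>" shows "\<bar>x\<bar> \<le> \<rho>/2 + x^2/(2*\<rho>)"
proof -
  have "0 \<le> (\<bar>x\<bar> - \<rho>)^2" by simp
  then have "2*\<rho>*\<bar>x\<bar> \<le> x^2 + \<rho>^2" by (simp add: power2_eq_square algebra_simps)
  then show ?thesis using assms by (simp add: field_simps power2_eq_square)
qed

lemma cnt_nonneg: "0 \<le> cnt v p a len"
  unfolding cnt_def by (intro sum_nonneg) auto

lemma Fr_nonneg: "0 \<le> Fr v p ll t"
  unfolding Fr_def using cnt_nonneg by simp

lemma Fr_sum_le: assumes "0 < L" shows "(\<Sum>s\<in>{1..q}. Fr v s L B) \<le> 1"
proof -
  have "(\<Sum>s\<in>{1..q}. cnt v s (B*L) L) = (\<Sum>i<L. \<Sum>s\<in>{1..q}. (if v ! (B*L+i) = s then 1 else 0))"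
    unfolding cnt_def by (rule sum.swap)
  also have "\<dots> \<le> (\<Sum>i<L. (1::real))"
    by (intro sum_mono) (simp add: sum.delta)
  finally have "(\<Sum>s\<in>{1..q}. cnt v s (B*L) L) \<le> L" by simp
  then show ?thesis using assms by (simp add: Fr_def sum_divide_distrib[symmetric])
qed


lemma core:
  fixes v :: "nat list" and q z r n ll K N :: nat and M :: "nat list \<times> nat list" and \<rho> :: real
  assumes match: "is_matching v (A_pref q r n) M"
    and mN: "length v = N * (K * ll)" and Npos: "0 < N" and Kpos: "0 < K" and llpos: "0 < ll"
    and rpos: "0 < r" and qpos: "0 < q" and rho: "0 < \<rho>"
  shows "(2*real z+1) * real (length (fst M)) \<le> (real z + real z^2) * real n / real q + (real z + real z^2) * real r
          + (2*real z+1) * real q * real r * real N + real (length v)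
          + (2*real z+1) * (real (length v) * \<rho>/2 + real ll * (\<Sum>\<beta><N*K. \<Sum>p=1..q. (Fr v p ll \<beta> - Fr v p (K*ll) (\<beta> div K))\<^sup>2)/(2*\<rho>))
          + 2 * real z * real ll * (real n / real r)"
proof -
  define L where "L = K*ll"
  define m where "m = length v"
  define D where "D = 2*real z+1"
  define \<alpha> where "\<alpha> B s = Fr v s L B" for B s
  define \<theta> where "\<theta> B s = (if D * \<alpha> B s > 1 then 1 - 1/(D * \<alpha> B s) else 0)" for B s
  define "is" where "is = fst M"
  define js where "js = snd M"
  define T where "T = length is"
  define Dsum where "Dsum = (\<Sum>\<beta><N*K. \<Sum>p=1..q. (Fr v p ll \<beta> - Fr v p (K*ll) (\<beta> div K))\<^sup>2)"
  have Lpos: "0 < L" using Kpos llpos by (simp add: L_def)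
  have mNL: "m = N * L" using mN by (simp add: m_def L_def)
  have Dpos: "D \<ge> 1" by (simp add: D_def)
  have Dsum_nn: "0 \<le> Dsum" unfolding Dsum_def by (intro sum_nonneg) auto
  have zz: "0 \<le> real z + real z^2" by simp
  have \<alpha>_nn: "0 \<le> \<alpha> B s" for B s by (simp add: \<alpha>_def Fr_nonneg)
  have \<theta>_nn: "0 \<le> \<theta> B s" for B s
  proof -
    have "D * \<alpha> B s > 1 \<Longrightarrow> 1/(D*\<alpha> B s) \<le> 1" by simp
    then show ?thesis by (simp add: \<theta>_def)
  qed
  have \<theta>_le: "\<theta> B s \<le> 1" for B s
  proof -
    have "D * \<alpha> B s > 1 \<Longrightarrow> 0 \<le> 1/(D*\<alpha> B s)" by simp
    then show ?thesis by (simp add: \<theta>_def)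
  qed
  have key: "D * (1 - \<theta> B s) * \<alpha> B s \<le> 1" for B s
  proof (cases "D * \<alpha> B s > 1")
    case True then show ?thesis by (simp add: \<theta>_def)
  next
    case False then show ?thesis by (simp add: \<theta>_def mult.assoc)
  qed
  have cyc: "D * (\<Sum>s\<in>{1..q}. \<theta> B s) \<le> real z + real z^2" for B
  proof -
    have "(2*real z+1) * (\<Sum>s\<in>{1..q}. if (2*real z+1) * \<alpha> B s > 1 then 1 - 1/((2*real z+1) * \<alpha> B s) else 0)
       \<le> real z + real z^2"
      using Fr_sum_le[OF Lpos, where v=v and q=q and B=B] Fr_nonneg by (intro theta_sum) (auto simp: \<alpha>_def)
    then show ?thesis unfolding \<theta>_def D_def .
  qed
  have lenjs: "length js = T" and sis: "sorted_wrt (<) is" and sjs: "sorted_wrt (<) js"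
    and isb: "\<forall>i\<in>set is. i < m" and jsb: "\<forall>j\<in>set js. j < n"
    and eqs: "\<forall>t<T. v ! (is!t) = A_pref q r n ! (js!t)"
    using match unfolding is_matching_def is_def js_def T_def m_def
    by (auto simp: Let_def A_pref_def)
  have isb': "is!t < m" if "t < T" for t using isb that by (simp add: T_def)
  have jsb': "js!t < n" if "t < T" for t using jsb that lenjs by simp
  have sym: "v ! (is!t) = (js!t div r) mod q + 1" if "t < T" for t
    using eqs that jsb' by (simp add: A_pref_def A_inf_def)
  show ?thesis
  proof (cases "T = 0")
    case True
    have "0 \<le> (real z + real z^2) * real n / real q + (real z + real z^2) * real r
          + (2*real z+1) * real q * real r * real N + real (length v)
          + (2*real z+1) * (real (length v) * \<rho>/2 + real ll * Dsum/(2*\<rho>))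
          + 2 * real z * real ll * (real n / real r)"
      using rho Dsum_nn by (intro add_nonneg_nonneg mult_nonneg_nonneg divide_nonneg_nonneg) auto
    then show ?thesis using True by (simp add: T_def is_def Dsum_def)
  next
    case False
    then have Tpos: "0 < T" by simp
    define U where "U x = js ! (nx is x) div r" for x
    define Bb where "Bb j = is ! (nx js j) div L" for j
    define \<sigma> where "\<sigma> x = U x mod q + 1" for x
    define gb where "gb j = D * \<theta> (Bb j) ((j div r) mod q + 1)" for j
    define gv where "gv x = D * (1 - \<theta> (x div L) (\<sigma> x)) * (if v!x = \<sigma> x then 1 else 0)" for x
    define th where "th t = \<theta> ((is!t) div L) ((js!t div r) mod q + 1)" for t
    have nxis: "nx is x < T" for x using nx_lt[of "is" x] Tpos by (simp add: T_def)
    have nxjs: "nx js x < T" for x using nx_lt[of js x] Tpos lenjs by simp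
    have monoU: "mono U"
    proof (rule monoI)
      fix x y :: nat assume "x \<le> y"
      then have "nx is x \<le> nx is y" using nx_mono[of "is" x y] Tpos by (simp add: T_def)
      then have "js ! (nx is x) \<le> js ! (nx is y)" using sorted_nth_mono[OF sjs] nxis lenjs by simp
      then show "U x \<le> U y" by (simp add: U_def div_le_mono)
    qed
    have monoB: "mono Bb"
    proof (rule monoI)
      fix x y :: nat assume "x \<le> y"
      then have "nx js x \<le> nx js y" using nx_mono[of js x y] Tpos lenjs by simp
      then have "is ! (nx js x) \<le> is ! (nx js y)" using sorted_nth_mono[OF sis] nxjs by (simp add: T_def)
      then show "Bb x \<le> Bb y" by (simp add: Bb_def div_le_mono)
    qed
    have Bb_lt: "Bb j < N" for j
    proof -
      have "is ! (nx js j) < N * L" using isb' nxjs mNL by simp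
      then show ?thesis by (simp add: Bb_def less_mult_imp_div_less)
    qed
    have U_le: "real (U x) \<le> real n / real r" for x
    proof -
      have "real (U x) \<le> real (js ! (nx is x)) / real r" unfolding U_def by (rule real_div_le)
      also have "\<dots> \<le> real n / real r" using jsb' nxis rpos by (intro divide_right_mono) (auto simp: less_imp_le)
      finally show ?thesis .
    qed
    have gb_nn: "0 \<le> gb j" for j using \<theta>_nn Dpos by (simp add: gb_def)
    have gb_le: "gb j \<le> D" for j using \<theta>_le Dpos by (simp add: gb_def)
    have gv_nn: "0 \<le> gv x" for x using \<theta>_le Dpos by (simp add: gv_def)
    have gv_le: "gv x \<le> D" for x
    proof -
      have "D * (1 - \<theta> (x div L) (\<sigma> x)) \<le> D" using \<theta>_nn Dpos by (simp add: mult_left_le)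
      then show ?thesis unfolding gv_def using Dpos by (cases "v!x = \<sigma> x") auto
    qed
    have stepA: "D * real T = (\<Sum>t<T. D * th t) + (\<Sum>t<T. D * (1 - th t))"
      by (simp add: sum.distrib[symmetric] algebra_simps)
    have dis: "distinct is" "distinct js" using sis sjs by (auto simp: strict_sorted_iff)
    have stepB: "(\<Sum>t<T. D * th t) \<le> (\<Sum>j<n. gb j)"
    proof -
      have "(\<Sum>t<T. D * th t) = (\<Sum>t<T. gb (js!t))"
        using nx_nth[OF sjs] lenjs by (intro sum.cong) (auto simp: gb_def th_def Bb_def)
      also have "\<dots> = sum gb ((!) js ` {..<T})"
        using inj_on_nth[OF dis(2), of "{..<T}"] lenjs by (simp add: sum.reindex)
      also have "\<dots> \<le> (\<Sum>j<n. gb j)"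
        using jsb' gb_nn by (intro sum_mono2) auto
      finally show ?thesis .
    qed
    have stepC: "(\<Sum>t<T. D * (1 - th t)) \<le> (\<Sum>x<m. gv x)"
    proof -
      have "(\<Sum>t<T. D * (1 - th t)) = (\<Sum>t<T. gv (is!t))"
      proof (intro sum.cong refl)
        fix t assume "t \<in> {..<T}"
        then have t: "t < T" by simp
        have s: "\<sigma> (is!t) = (js!t div r) mod q + 1"
          using nx_nth[OF sis, of t] t by (simp add: \<sigma>_def U_def T_def)
        show "D * (1 - th t) = gv (is!t)"
          using sym[OF t] s by (simp add: gv_def th_def)
      qed
      also have "\<dots> = sum gv ((!) is ` {..<T})"
        using inj_on_nth[OF dis(1), of "{..<T}"] by (simp add: sum.reindex T_def)
      also have "\<dots> \<le> (\<Sum>x<m. gv x)"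
        using isb' gv_nn by (intro sum_mono2) auto
      finally show ?thesis .
    qed
    have stepD: "(\<Sum>j<n. gb j) \<le> (real z + real z^2) * real n / real q + (real z + real z^2) * real r + D * real q * real r * real N"
    proof -
      define Q where "Q = q*r"
      define C where "C = n div Q + 1"
      have Qpos: "0 < Q" using qpos rpos by (simp add: Q_def)
      have nC: "n \<le> C*Q"
      proof -
        have a: "n div Q * Q + n mod Q = n" by (rule div_mult_mod_eq)
        have b: "n mod Q < Q" using Qpos by simp
        have "n \<le> Q + n div Q * Q" using a b by linarith
        then show ?thesis unfolding C_def by (simp add: algebra_simps)
      qed
      have "(\<Sum>j<n. gb j) \<le> (\<Sum>j<C*Q. gb j)" using nC gb_nn by (intro sum_mono2) auto
      also have "\<dots> = (\<Sum>c<C. \<Sum>y<Q. gb (c*Q+y))" by (rule sum_group)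
      also have "\<dots> \<le> (\<Sum>c<C. (real z + real z^2) * real r + D*real q*real r*(real (Bb (Suc c * Q)) - real (Bb (c*Q))))"
      proof (intro sum_mono)
        fix c
        have dnn: "0 \<le> real (Bb (Suc c * Q)) - real (Bb (c*Q))" using monoB by (simp add: monoD)
        have Dqr: "0 \<le> D*real q*real r" using Dpos by simp
        show "(\<Sum>y<Q. gb (c*Q+y)) \<le> (real z + real z^2) * real r + D*real q*real r*(real (Bb (Suc c * Q)) - real (Bb (c*Q)))"
        proof (cases "Bb (c*Q + (Q-1)) = Bb (c*Q)")
          case True
          define B where "B = Bb (c*Q)"
          have const: "Bb (c*Q+y) = B" if "y < Q" for y
            using mono_const[OF monoB True, of y] that by (simp add: B_def)
          have "(\<Sum>y<Q. gb (c*Q+y)) = (\<Sum>a<q. \<Sum>b<r. gb (c*Q + (a*r+b)))" unfolding Q_def by (rule sum_group)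
          also have "\<dots> = (\<Sum>a<q. \<Sum>b<r. D * \<theta> B (Suc a))"
          proof (intro sum.cong refl)
            fix a b assume a: "a \<in> {..<q}" and b: "b \<in> {..<r}"
            have "a*r+b < (a+1)*r" using b by simp
            also have "\<dots> \<le> q*r" using a by (intro mult_le_mono1) simp
            finally have lt: "a*r+b < Q" by (simp add: Q_def)
            have e: "c*Q + (a*r+b) = b + (c*q+a)*r" by (simp add: Q_def algebra_simps)
            have "(c*Q + (a*r+b)) div r = c*q + a" unfolding e using b rpos by simp
            then have "((c*Q + (a*r+b)) div r) mod q + 1 = Suc a" using a by simp
            then show "gb (c*Q + (a*r+b)) = D * \<theta> B (Suc a)" using const[OF lt] by (simp add: gb_def)
          qed
          also have "\<dots> = real r * (D * (\<Sum>s\<in>{1..q}. \<theta> B s))"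
            by (simp add: sum_distrib_left sum.atLeast1_atMost_eq mult.commute)
          also have "\<dots> \<le> real r * (real z + real z^2)" using cyc[of B] by (intro mult_left_mono) auto
          finally have X: "(\<Sum>y<Q. gb (c*Q+y)) \<le> real r * (real z + real z^2)" .
          have Y: "0 \<le> D*real q*real r*(real (Bb (Suc c * Q)) - real (Bb (c*Q)))" using dnn Dqr by simp
          have Z: "real r * (real z + real z^2) = (real z + real z^2) * real r" by (simp add: mult.commute)
          show ?thesis using X Y Z by linarith
        next
          case False
          have d: "1 \<le> real (Bb (c*Q + Suc (Q-1))) - real (Bb (c*Q))" by (rule mono_nat_diff_ge1[OF monoB False])
          have e: "c*Q + Suc (Q-1) = Suc c * Q" using Qpos by simp
          have "(\<Sum>y<Q. gb (c*Q+y)) \<le> (\<Sum>y<Q. D)" by (intro sum_mono gb_le)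
          also have "\<dots> = D*real q*real r" by (simp add: Q_def)
          also have "\<dots> \<le> D*real q*real r*(real (Bb (Suc c * Q)) - real (Bb (c*Q)))"
          proof -
            have d': "1 \<le> real (Bb (Suc c * Q)) - real (Bb (c*Q))" using d unfolding e .
            show ?thesis using mult_left_mono[OF d' Dqr] by simp
          qed
          finally show ?thesis using zz by (smt (verit) mult_nonneg_nonneg of_nat_0_le_iff)
        qed
      qed
      also have "\<dots> = real C * ((real z + real z^2) * real r) + D*real q*real r*(real (Bb (C*Q)) - real (Bb 0))"
      proof -
        have "(\<Sum>c<C. real (Bb (Suc c * Q)) - real (Bb (c*Q))) = real (Bb (C*Q)) - real (Bb (0*Q))"
          by (rule sum_lessThan_telescope[where f="\<lambda>c. real (Bb (c*Q))"])
        then show ?thesis by (simp add: sum.distrib sum_distrib_left[symmetric])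
      qed
      also have "\<dots> \<le> (real z + real z^2) * real n / real q + (real z + real z^2) * real r + D * real q * real r * real N"
      proof -
        have "real C \<le> real n / real Q + 1" using real_div_le[of n Q] by (simp add: C_def)
        then have "real C * ((real z + real z^2) * real r) \<le> (real n / real Q + 1) * ((real z + real z^2) * real r)"
          using zz by (intro mult_right_mono) auto
        also have "\<dots> = (real z + real z^2) * real n / real q + (real z + real z^2) * real r"
          using qpos rpos by (simp add: Q_def field_simps)
        finally have 1: "real C * ((real z + real z^2) * real r) \<le> (real z + real z^2) * real n / real q + (real z + real z^2) * real r" .
        have "real (Bb (C*Q)) - real (Bb 0) \<le> real N" using Bb_lt[of "C*Q"] by simp
        then have 2: "D*real q*real r*(real (Bb (C*Q)) - real (Bb 0)) \<le> D*real q*real r*real N"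
          using Dpos by (intro mult_left_mono) auto
        show ?thesis using 1 2 by linarith
      qed
      finally show ?thesis .
    qed
    have stepE: "(\<Sum>x<m. gv x) \<le> real m + D * (real m * \<rho>/2 + real ll * Dsum/(2*\<rho>)) + 2 * real z * real ll * (real n / real r)"
    proof -
      have m2: "m = (N*K)*ll" using mN by (simp add: m_def)
      define DD where "DD \<beta> = (\<Sum>p=1..q. (Fr v p ll \<beta> - Fr v p (K*ll) (\<beta> div K))\<^sup>2)" for \<beta>
      have DDnn: "0 \<le> DD \<beta>" for \<beta> unfolding DD_def by (intro sum_nonneg) auto
      have "(\<Sum>x<m. gv x) = (\<Sum>\<beta><N*K. \<Sum>y<ll. gv (\<beta>*ll+y))" unfolding m2 by (rule sum_group)
      also have "\<dots> \<le> (\<Sum>\<beta><N*K. real ll + D*real ll*(\<rho>/2 + DD \<beta>/(2*\<rho>)) + 2*real z*real ll*(real (U (Suc \<beta> * ll)) - real (U (\<beta>*ll))))"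
      proof (intro sum_mono)
        fix \<beta>
        have dnn: "0 \<le> real (U (Suc \<beta> * ll)) - real (U (\<beta>*ll))" using monoU by (simp add: monoD)
        have t3: "0 \<le> D*real ll*(\<rho>/2 + DD \<beta>/(2*\<rho>))" using Dpos rho DDnn by simp
        have t4: "0 \<le> 2*real z*real ll*(real (U (Suc \<beta> * ll)) - real (U (\<beta>*ll)))" using dnn by simp
        show "(\<Sum>y<ll. gv (\<beta>*ll+y)) \<le> real ll + D*real ll*(\<rho>/2 + DD \<beta>/(2*\<rho>)) + 2*real z*real ll*(real (U (Suc \<beta> * ll)) - real (U (\<beta>*ll)))"
        proof (cases "U (\<beta>*ll + (ll-1)) = U (\<beta>*ll)")
          case True
          define s where "s = U (\<beta>*ll) mod q + 1"
          define B where "B = \<beta> div K"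
          have sig: "\<sigma> (\<beta>*ll+y) = s" if "y<ll" for y
            using mono_const[OF monoU True, of y] that by (simp add: \<sigma>_def s_def)
          have bl: "(\<beta>*ll+y) div L = B" if "y<ll" for y
          proof -
            have "(\<beta>*ll+y) div L = ((\<beta>*ll+y) div ll) div K" unfolding L_def by (metis div_mult2_eq mult.commute)
            also have "(\<beta>*ll+y) div ll = \<beta>" using that by simp
            finally show ?thesis by (simp add: B_def)
          qed
          have "(\<Sum>y<ll. gv (\<beta>*ll+y)) = (\<Sum>y<ll. D*(1-\<theta> B s) * (if v!(\<beta>*ll+y) = s then 1 else 0))"
            by (intro sum.cong refl) (simp add: gv_def sig bl)
          also have "\<dots> = D*(1-\<theta> B s) * cnt v s (\<beta>*ll) ll" by (simp add: cnt_def sum_distrib_left)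
          also have "\<dots> = real ll * (D*(1-\<theta> B s) * Fr v s ll \<beta>)" using llpos by (simp add: Fr_def)
          also have "\<dots> \<le> real ll * (1 + D * (\<rho>/2 + DD \<beta>/(2*\<rho>)))"
          proof (intro mult_left_mono)
            define f where "f = Fr v s ll \<beta>"
            define a where "a = \<alpha> B s"
            have a_eq: "a = Fr v s (K*ll) B" by (simp add: a_def \<alpha>_def L_def)
            have s_in: "s \<in> {1..q}" using qpos mod_less_divisor[OF qpos, of "U (\<beta>*ll)"] by (simp add: s_def)
            have sq: "(f - a)\<^sup>2 \<le> DD \<beta>" unfolding DD_def a_eq B_def f_def
              by (rule member_le_sum[OF s_in]) auto
            have ab: "\<bar>f - a\<bar> \<le> \<rho>/2 + DD \<beta>/(2*\<rho>)"
            proof -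
              have "(f-a)^2/(2*\<rho>) \<le> DD \<beta>/(2*\<rho>)" using sq rho by (intro divide_right_mono) auto
              then show ?thesis using abs_le_rho[OF rho, of "f-a"] by linarith
            qed
            have c1: "0 \<le> D*(1-\<theta> B s)" "D*(1-\<theta> B s) \<le> D" using Dpos \<theta>_nn[of B s] \<theta>_le[of B s]
              by (auto simp: mult_left_le)
            have "D*(1-\<theta> B s)*f = D*(1-\<theta> B s)*a + D*(1-\<theta> B s)*(f-a)" by (simp add: algebra_simps)
            also have "D*(1-\<theta> B s)*a \<le> 1" using key[of B s] by (simp add: a_def)
            also have "D*(1-\<theta> B s)*(f-a) \<le> D*(1-\<theta> B s)*\<bar>f-a\<bar>" using c1 by (intro mult_left_mono) auto
            also have "\<dots> \<le> D*\<bar>f-a\<bar>" using c1 by (intro mult_right_mono) auto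
            also have "\<dots> \<le> D*(\<rho>/2 + DD \<beta>/(2*\<rho>))" using ab Dpos by (intro mult_left_mono) auto
            finally show "D*(1-\<theta> B s)*Fr v s ll \<beta> \<le> 1 + D * (\<rho>/2 + DD \<beta>/(2*\<rho>))" by (simp add: f_def)
          qed simp
          finally show ?thesis using t4 by (simp add: algebra_simps)
        next
          case False
          have d: "1 \<le> real (U (\<beta>*ll + Suc (ll-1))) - real (U (\<beta>*ll))" by (rule mono_nat_diff_ge1[OF monoU False])
          have e: "\<beta>*ll + Suc (ll-1) = Suc \<beta> * ll" using llpos by simp
          have "(\<Sum>y<ll. gv (\<beta>*ll+y)) \<le> (\<Sum>y<ll. D)" by (intro sum_mono gv_le)
          also have "\<dots> = real ll + 2*real z*real ll" by (simp add: D_def algebra_simps)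
          also have "2*real z*real ll \<le> 2*real z*real ll*(real (U (Suc \<beta> * ll)) - real (U (\<beta>*ll)))"
          proof -
            have d': "1 \<le> real (U (Suc \<beta> * ll)) - real (U (\<beta>*ll))" using d unfolding e .
            show ?thesis using mult_left_mono[OF d', of "2*real z*real ll"] by simp
          qed
          finally show ?thesis using t3 by linarith
        qed
      qed
      also have "\<dots> = real (N*K) * real ll + D*(real (N*K) * real ll * \<rho>/2 + real ll * Dsum/(2*\<rho>))
                       + 2*real z*real ll*(real (U ((N*K)*ll)) - real (U (0*ll)))"
      proof -
        have tel: "(\<Sum>\<beta><N*K. real (U (Suc \<beta> * ll)) - real (U (\<beta>*ll))) = real (U ((N*K)*ll)) - real (U (0*ll))"
          by (rule sum_lessThan_telescope[where f="\<lambda>\<beta>. real (U (\<beta>*ll))"])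
        have ds: "Dsum = (\<Sum>\<beta><N*K. DD \<beta>)" by (simp add: Dsum_def DD_def)
        have s1: "(\<Sum>\<beta><N*K. D*real ll*(\<rho>/2 + DD \<beta>/(2*\<rho>))) = D*real ll*(real (N*K)*\<rho>/2 + Dsum/(2*\<rho>))"
          by (simp add: sum_distrib_left[symmetric] sum.distrib ds sum_divide_distrib[symmetric])
        have s2: "(\<Sum>\<beta><N*K. 2*real z*real ll*(real (U (Suc \<beta> * ll)) - real (U (\<beta>*ll))))
             = 2*real z*real ll*(real (U ((N*K)*ll)) - real (U (0*ll)))"
          by (simp only: sum_distrib_left[symmetric] tel)
        have s0: "(\<Sum>\<beta><N*K. real ll) = real (N*K) * real ll" by simp
        have "(\<Sum>\<beta><N*K. real ll + D*real ll*(\<rho>/2 + DD \<beta>/(2*\<rho>)) + 2*real z*real ll*(real (U (Suc \<beta> * ll)) - real (U (\<beta>*ll))))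
           = (\<Sum>\<beta><N*K. real ll) + (\<Sum>\<beta><N*K. D*real ll*(\<rho>/2 + DD \<beta>/(2*\<rho>))) + (\<Sum>\<beta><N*K. 2*real z*real ll*(real (U (Suc \<beta> * ll)) - real (U (\<beta>*ll))))"
          by (simp only: sum.distrib)
        also have "\<dots> = real (N*K) * real ll + D*real ll*(real (N*K)*\<rho>/2 + Dsum/(2*\<rho>)) + 2*real z*real ll*(real (U ((N*K)*ll)) - real (U (0*ll)))"
          by (simp only: s0 s1 s2)
        finally show ?thesis by (simp add: algebra_simps)
      qed
      also have "\<dots> \<le> real m + D * (real m * \<rho>/2 + real ll * Dsum/(2*\<rho>)) + 2 * real z * real ll * (real n / real r)"
      proof -
        have "real (U ((N*K)*ll)) - real (U (0*ll)) \<le> real n / real r" using U_le[of "(N*K)*ll"] by simp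
        then have "2*real z*real ll*(real (U ((N*K)*ll)) - real (U (0*ll))) \<le> 2 * real z * real ll * (real n / real r)"
          by (intro mult_left_mono) auto
        then show ?thesis using m2 by simp
      qed
      finally show ?thesis .
    qed
    have fin: "D * real T \<le> (real z + real z^2) * real n / real q + (real z + real z^2) * real r
          + D * real q * real r * real N + real m
          + D * (real m * \<rho>/2 + real ll * Dsum/(2*\<rho>))
          + 2 * real z * real ll * (real n / real r)"
      using stepA stepB stepC stepD stepE by linarith
    then show ?thesis unfolding D_def T_def is_def m_def Dsum_def .
  qed
qed


lemma matching_len: assumes "is_matching a b M" shows "length (fst M) \<le> length a"
proof -
  have d: "distinct (fst M)" and s: "set (fst M) \<subseteq> {..<length a}"
    using assms by (auto simp: is_matching_def Let_def strict_sorted_iff)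
  have "length (fst M) = card (set (fst M))" using d by (simp add: distinct_card)
  also have "\<dots> \<le> card {..<length a}" using s by (intro card_mono) auto
  finally show ?thesis by simp
qed

lemma matchings_finite: "finite {M. is_matching a b M}"
proof -
  have "{M. is_matching a b M} \<subseteq> {xs. set xs \<subseteq> {..<length a} \<and> length xs \<le> length a} \<times>
                                  {ys. set ys \<subseteq> {..<length b} \<and> length ys \<le> length b}"
  proof clarify
    fix xs ys assume m: "is_matching a b (xs, ys)"
    have "length xs \<le> length a" using matching_len[OF m] by simp
    moreover have "length ys \<le> length b"
    proof -
      have d: "distinct ys" and s: "set ys \<subseteq> {..<length b}"
        using m by (auto simp: is_matching_def Let_def strict_sorted_iff)
      have "length ys = card (set ys)" using d by (simp add: distinct_card)
      also have "\<dots> \<le> card {..<length b}" using s by (intro card_mono) auto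
      finally show ?thesis by simp
    qed
    ultimately show "xs \<in> {xs. set xs \<subseteq> {..<length a} \<and> length xs \<le> length a} \<and>
         ys \<in> {ys. set ys \<subseteq> {..<length b} \<and> length ys \<le> length b}"
      using m by (auto simp: is_matching_def Let_def)
  qed
  moreover have "finite ({xs. set xs \<subseteq> {..<length a} \<and> length xs \<le> length a} \<times>
                                  {ys. set ys \<subseteq> {..<length b} \<and> length ys \<le> length b})"
    by (intro finite_cartesian_product finite_lists_length_le) auto
  ultimately show ?thesis by (rule finite_subset)
qed

lemma adv_attained: "\<exists>M. is_matching a b M \<and> adv q z a b = adv_M q z M a b"
proof -
  have ne: "([],[]) \<in> {M. is_matching a b M}" by (simp add: is_matching_def)
  have "adv q z a b \<in> (\<lambda>M. adv_M q z M a b) ` {M. is_matching a b M}"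
    unfolding adv_def using matchings_finite ne by (intro Max_in) auto
  then show ?thesis by auto
qed


theorem lemma5p6:
  shows "\<exists>c::real. c > 0 \<and>
    (\<forall>q::nat. q \<ge> 2 \<longrightarrow> (\<exists>\<epsilon>0::real. \<epsilon>0 > 0 \<and>
      (\<forall>(\<epsilon>::real) (z::nat) (n::nat) (v::nat list) (k::nat) (r::nat \<Rightarrow> nat) (l::nat \<Rightarrow> nat).
         0 < \<epsilon> \<and> \<epsilon> < \<epsilon>0 \<and> 1 \<le> z \<and> z \<le> q - 1 \<and> 0 < n \<and> set v \<subseteq> {1..q} \<and>
         (\<forall>j\<in>{1..k}. 0 < r j) \<and>
         (\<forall>j. 1 \<le> j \<and> j < k \<longrightarrow> r j > r (Suc j) \<and> real (r j) \<ge> real (r (Suc j)) / \<epsilon> ^ 4) \<and>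
         (\<forall>j\<in>{1..k}. real (l j) = \<epsilon>\<^sup>2 * real (r j)) \<and>
         l 1 dvd length v \<and>
         (\<forall>j. 1 \<le> j \<and> j < k \<longrightarrow> l (Suc j) dvd l j) \<and>
         (\<forall>j\<in>{1..k}. adv q z v (A_pref q (r j) n) \<ge> \<epsilon> / real q)
       \<longrightarrow> (\<forall>i. 1 \<le> i \<and> i < k \<longrightarrow>
              fvar q l v (Suc i) \<ge> fvar q l v i + c * \<epsilon>\<^sup>2 / real q ^ 4))))"
proof (rule exI[of _ "1/32"], intro conjI allI impI)
  show "(0::real) < 1/32" by simp
  fix q :: nat assume q2: "2 \<le> q"
  show "\<exists>\<epsilon>0::real. \<epsilon>0 > 0 \<and>
      (\<forall>(\<epsilon>::real) (z::nat) (n::nat) (v::nat list) (k::nat) (r::nat \<Rightarrow> nat) (l::nat \<Rightarrow> nat).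
         0 < \<epsilon> \<and> \<epsilon> < \<epsilon>0 \<and> 1 \<le> z \<and> z \<le> q - 1 \<and> 0 < n \<and> set v \<subseteq> {1..q} \<and>
         (\<forall>j\<in>{1..k}. 0 < r j) \<and>
         (\<forall>j. 1 \<le> j \<and> j < k \<longrightarrow> r j > r (Suc j) \<and> real (r j) \<ge> real (r (Suc j)) / \<epsilon> ^ 4) \<and>
         (\<forall>j\<in>{1..k}. real (l j) = \<epsilon>\<^sup>2 * real (r j)) \<and>
         l 1 dvd length v \<and>
         (\<forall>j. 1 \<le> j \<and> j < k \<longrightarrow> l (Suc j) dvd l j) \<and>
         (\<forall>j\<in>{1..k}. adv q z v (A_pref q (r j) n) \<ge> \<epsilon> / real q)
       \<longrightarrow> (\<forall>i. 1 \<le> i \<and> i < k \<longrightarrow>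
              fvar q l v (Suc i) \<ge> fvar q l v i + 1/32 * \<epsilon>\<^sup>2 / real q ^ 4))"
  proof (rule exI[of _ "1/(18*real q^3)"], intro conjI allI impI)
    show "0 < 1/(18*real q^3)" using q2 by simp
    fix \<epsilon> :: real and z n :: nat and v :: "nat list" and k :: nat and r l :: "nat \<Rightarrow> nat" and i :: nat
    assume H: "0 < \<epsilon> \<and> \<epsilon> < 1/(18*real q^3) \<and> 1 \<le> z \<and> z \<le> q - 1 \<and> 0 < n \<and> set v \<subseteq> {1..q} \<and>
         (\<forall>j\<in>{1..k}. 0 < r j) \<and>
         (\<forall>j. 1 \<le> j \<and> j < k \<longrightarrow> r j > r (Suc j) \<and> real (r j) \<ge> real (r (Suc j)) / \<epsilon> ^ 4) \<and>
         (\<forall>j\<in>{1..k}. real (l j) = \<epsilon>\<^sup>2 * real (r j)) \<and>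
         l 1 dvd length v \<and>
         (\<forall>j. 1 \<le> j \<and> j < k \<longrightarrow> l (Suc j) dvd l j) \<and>
         (\<forall>j\<in>{1..k}. adv q z v (A_pref q (r j) n) \<ge> \<epsilon> / real q)"
      and Hi: "1 \<le> i \<and> i < k"
    have eps: "0 < \<epsilon>" "\<epsilon> < 1/(18*real q^3)" and z1: "1 \<le> z" and zq: "z \<le> q - 1"
      and rpos: "\<forall>j\<in>{1..k}. 0 < r j"
      and rdec: "\<forall>j. 1 \<le> j \<and> j < k \<longrightarrow> r j > r (Suc j) \<and> real (r j) \<ge> real (r (Suc j)) / \<epsilon> ^ 4"
      and lr: "\<forall>j\<in>{1..k}. real (l j) = \<epsilon>\<^sup>2 * real (r j)"
      and l1: "l 1 dvd length v" and chain: "\<forall>j. 1 \<le> j \<and> j < k \<longrightarrow> l (Suc j) dvd l j"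
      and advh: "\<forall>j\<in>{1..k}. adv q z v (A_pref q (r j) n) \<ge> \<epsilon> / real q"
      using H by auto
    have i1: "1 \<le> i" and ik: "i < k" using Hi by auto
    have qpos: "0 < q" using q2 by simp
    have lpos: "\<forall>j\<in>{1..k}. 0 < l j"
    proof
      fix j assume j: "j \<in> {1..k}"
      have "0 < \<epsilon>\<^sup>2 * real (r j)" using eps rpos j by simp
      then show "0 < l j" using lr j by (metis of_nat_0_less_iff)
    qed
    define r' where "r' = r (Suc i)"
    define ll where "ll = l (Suc i)"
    define L where "L = l i"
    define m where "m = length v"
    obtain M where M: "is_matching v (A_pref q r' n) M" "adv q z v (A_pref q r' n) = adv_M q z M v (A_pref q r' n)"
      using adv_attained by blast
    have advM: "adv_M q z M v (A_pref q r' n) \<ge> \<epsilon> / real q"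
      using M(2) bspec[OF advh, of "Suc i"] Hi by (simp add: r'_def)
    have mpos: "0 < m"
    proof (rule ccontr)
      assume "\<not> 0 < m"
      then have "adv_M q z M v (A_pref q r' n) = 0" by (simp add: adv_M_def m_def)
      moreover have "0 < \<epsilon> / real q" using eps qpos by simp
      ultimately show False using advM by linarith
    qed
    have si: "Suc i \<in> {1..k}" and ii: "i \<in> {1..k}" using Hi by auto
    have mpos': "0 < length v" using mpos by (simp add: m_def)
    have dvL: "L dvd m" using walk_eq[OF l1 chain lpos mpos'] Hi by (auto simp: L_def m_def)
    have dll: "ll dvd L" using chain Hi by (simp add: ll_def L_def)
    have llpos: "0 < ll" using lpos si by (simp add: ll_def)
    have Lpos: "0 < L" using lpos ii by (simp add: L_def)
    have r'pos: "0 < r'" using rpos si by (simp add: r'_def)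
    define K where "K = L div ll"
    define N where "N = m div L"
    have LK: "L = K*ll" using dll by (simp add: K_def)
    have mNL: "m = N*L" using dvL by (simp add: N_def)
    have Npos: "0 < N" using mpos mNL by (cases N) auto
    have Kpos: "0 < K" using Lpos LK by (cases K) auto
    have mdivll: "m div ll = N*K" using mNL LK llpos by simp
    define Dsum where "Dsum = (\<Sum>\<beta><N*K. \<Sum>p=1..q. (Fr v p ll \<beta> - Fr v p (K*ll) (\<beta> div K))\<^sup>2)"
    define W where "W = Dsum / real (N*K)"
    have Dsum_nn: "0 \<le> Dsum" unfolding Dsum_def by (intro sum_nonneg) auto
    have W_nn: "0 \<le> W" using Dsum_nn by (simp add: W_def)
    have Wd: "fvar q l v (Suc i) - fvar q l v i = W"
    proof -
      have F1: "fvar q l v i = (\<Sum>p=1..q. (\<Sum>t<N. (Fr v p L t - cnt v p 0 m / m)\<^sup>2) / real N)"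
        using fvar_formula[OF l1 chain lpos mpos', of i q] Hi by (simp add: L_def m_def N_def)
      have F2: "fvar q l v (Suc i) = (\<Sum>p=1..q. (\<Sum>t<N*K. (Fr v p ll t - cnt v p 0 m / m)\<^sup>2) / real (N*K))"
        using fvar_formula[OF l1 chain lpos mpos', of "Suc i" q] Hi mdivll by (simp add: ll_def m_def)
      have "fvar q l v (Suc i) - fvar q l v i =
          (\<Sum>p=1..q. (\<Sum>t<N*K. (Fr v p ll t - cnt v p 0 m / m)\<^sup>2) / real (N*K) - (\<Sum>t<N. (Fr v p L t - cnt v p 0 m / m)\<^sup>2) / real N)"
        unfolding F1 F2 by (simp add: sum_subtractf)
      also have "\<dots> = (\<Sum>p=1..q. (\<Sum>b<N*K. (Fr v p ll b - Fr v p L (b div K))\<^sup>2)/real(N*K))"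
        using var_diff[of v N L K ll] mNL LK Npos Kpos llpos by (simp add: m_def)
      also have "\<dots> = W" unfolding W_def Dsum_def LK
        by (simp add: sum_divide_distrib[symmetric], rule disjI2, rule disjI2, rule sum.swap)
      finally show ?thesis .
    qed
    define \<rho> where "\<rho> = \<epsilon> / (8 * real q^2)"
    have rho: "0 < \<rho>" using eps qpos by (simp add: \<rho>_def)
    define T where "T = real (length (fst M))"
    have core': "(2*real z+1) * T \<le> (real z + real z^2) * real n / real q + (real z + real z^2) * real r'
          + (2*real z+1) * real q * real r' * real N + real m
          + (2*real z+1) * (real m * \<rho>/2 + real ll * Dsum/(2*\<rho>))
          + 2 * real z * real ll * (real n / real r')"
      using core[OF M(1) _ Npos Kpos llpos r'pos qpos rho, of z] mNL LK unfolding T_def Dsum_def m_def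
      by simp
    have lD: "real ll * Dsum = real m * W"
      using mNL LK Npos Kpos by (simp add: W_def)
    have TM: "T \<le> real m" using matching_len[OF M(1)] by (simp add: T_def m_def)
    have adv': "\<epsilon> * real m / real q \<le> (2*real z+1) * T - real m - (real z + real z^2) * real n / real q"
    proof -
      have "\<epsilon> / real q \<le> ((2*real z+1) * T - real m - (real z + real z^2) / real q * real n) / real m"
        using advM by (simp add: adv_M_def matching_size_def T_def m_def A_pref_def)
      then have "\<epsilon> / real q * real m \<le> (2*real z+1) * T - real m - (real z + real z^2) / real q * real n"
        using mpos by (simp add: le_divide_eq)
      then show ?thesis by (simp add: algebra_simps)
    qed
    have Qge: "2 \<le> real q" using q2 by simp
    have zq1: "z + 1 \<le> q" using zq q2 by simp
    then have zq': "real z + 1 \<le> real q" by (metis of_nat_1 of_nat_add of_nat_le_iff)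
    have zz: "real z + real z^2 \<le> real q^2"
    proof -
      have "real z * (real z + 1) \<le> real q * real q" using zq' by (intro mult_mono) auto
      then show ?thesis by (simp add: power2_eq_square algebra_simps)
    qed
    have D2q: "2*real z+1 \<le> 2*real q" using zq' by simp
    have e2pos: "0 < \<epsilon>^2" using eps by simp
    have rr: "real r' \<le> \<epsilon>^2 * real L"
    proof -
      have "real (r i) \<ge> real r' / \<epsilon>^4" using rdec Hi by (simp add: r'_def)
      then have "real r' \<le> real (r i) * \<epsilon>^4" using eps by (simp add: divide_le_eq)
      moreover have "real L = \<epsilon>^2 * real (r i)" using lr ii by (simp add: L_def)
      ultimately show ?thesis by (simp add: power_def algebra_simps)
    qed
    have Lm: "real L \<le> real m" using dvd_imp_le[OF dvL mpos] by simp
    have b1: "real r' \<le> \<epsilon>^2 * real m" using rr Lm e2pos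
      by (meson mult_left_mono less_imp_le order_trans)
    have b2: "real N * real r' \<le> \<epsilon>^2 * real m"
    proof -
      have "real N * real r' \<le> real N * (\<epsilon>^2 * real L)" using rr by (intro mult_left_mono) auto
      also have "\<dots> = \<epsilon>^2 * real m" using mNL by simp
      finally show ?thesis .
    qed
    have b3: "real ll * (real n / real r') = \<epsilon>^2 * real n"
    proof -
      have "real ll = \<epsilon>^2 * real r'" using lr si by (simp add: ll_def r'_def)
      then show ?thesis using r'pos by simp
    qed
    have b4: "real n \<le> real q * real m"
    proof -
      have "0 \<le> \<epsilon> * real m / real q" using eps by simp
      moreover have "(2*real z+1) * T \<le> (2*real z+1) * real m" using TM by (intro mult_left_mono) auto
      ultimately have "(real z + real z^2) * real n / real q \<le> 2 * real z * real m"
        using adv' by (simp add: algebra_simps)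
      then have "(real z + real z^2) * real n \<le> 2 * real z * real m * real q"
        using qpos by (simp add: divide_le_eq)
      moreover have "2 * real z * real n \<le> (real z + real z^2) * real n"
      proof -
        have "real z \<le> real z^2" using z1 by (simp add: power2_eq_square)
        then show ?thesis by (intro mult_right_mono) auto
      qed
      ultimately have "2 * real z * real n \<le> 2 * real z * (real q * real m)" by (simp add: algebra_simps)
      then show ?thesis using z1 by simp
    qed
    have e1: "(real z + real z^2) * real r' \<le> real q^2 * (\<epsilon>^2 * real m)"
      using zz b1 by (intro mult_mono) auto
    have e2: "(2*real z+1) * real q * real r' * real N \<le> 2*real q * real q * (\<epsilon>^2 * real m)"
    proof -
      have "(2*real z+1) * real q * real r' * real N = ((2*real z+1) * real q) * (real N * real r')" by simp
      also have "\<dots> \<le> (2*real q * real q) * (\<epsilon>^2 * real m)"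
      proof -
        have a: "(2*real z+1) * real q \<le> 2*real q * real q" using D2q by (intro mult_right_mono) auto
        show ?thesis by (rule mult_mono[OF a b2]) auto
      qed
      finally show ?thesis by simp
    qed
    have e3: "(2*real z+1) * (real m * \<rho>/2 + real ll * Dsum/(2*\<rho>)) \<le> 2*real q * (real m * \<rho>/2 + real m * W/(2*\<rho>))"
      unfolding lD using D2q rho W_nn by (intro mult_right_mono) auto
    have e4: "2 * real z * real ll * (real n / real r') \<le> 2 * real q^2 * (\<epsilon>^2 * real m)"
    proof -
      have "2 * real z * real ll * (real n / real r') = 2 * real z * (real ll * (real n / real r'))" by simp
      also have "\<dots> = 2 * real z * (\<epsilon>^2 * real n)" unfolding b3 ..
      also have "\<dots> \<le> 2 * real q * (\<epsilon>^2 * (real q * real m))"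
        using zq' b4 e2pos by (intro mult_mono) auto
      finally show ?thesis by (simp add: power2_eq_square algebra_simps)
    qed
    have H1: "\<epsilon> * real m / real q \<le> real q^2 * (\<epsilon>^2 * real m) + 2*real q * real q * (\<epsilon>^2 * real m)
              + 2*real q * (real m * \<rho>/2 + real m * W/(2*\<rho>)) + 2 * real q^2 * (\<epsilon>^2 * real m)"
      using core' adv' e1 e2 e3 e4 by linarith
    have H2: "\<epsilon> / real q \<le> 5 * real q^2 * \<epsilon>^2 + real q * \<rho> + real q * W / \<rho>"
    proof -
      have X: "real m * (\<epsilon> / real q) \<le> real m * (5 * real q^2 * \<epsilon>^2 + real q * \<rho> + real q * W / \<rho>)"
        using H1 by (simp add: power2_eq_square algebra_simps add_divide_distrib)
      have "0 < real m" using mpos by simp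
      then show ?thesis using X by (simp only: mult_le_cancel_left_pos)
    qed
    have Wb: "\<epsilon>^2 / (32 * real q^4) \<le> W"
    proof (rule ccontr)
      assume "\<not> \<epsilon>^2 / (32 * real q^4) \<le> W"
      then have Wl: "W < \<epsilon>^2 / (32 * real q^4)" by simp
      have f1: "real q * W / \<rho> < \<epsilon> / (4 * real q)"
      proof -
        have "real q * W / \<rho> = 8 * real q^3 * W / \<epsilon>" using eps qpos by (simp add: \<rho>_def field_simps power_def)
        also have "\<dots> < 8 * real q^3 * (\<epsilon>^2 / (32 * real q^4)) / \<epsilon>"
          using Wl eps qpos by (intro divide_strict_right_mono mult_strict_left_mono) auto
        also have "\<dots> = \<epsilon> / (4 * real q)" using eps qpos by (simp add: field_simps power_def)
        finally show ?thesis .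
      qed
      have f2: "real q * \<rho> = \<epsilon> / (8 * real q)" using qpos by (simp add: \<rho>_def power2_eq_square field_simps)
      have f3: "5 * real q^2 * \<epsilon>^2 < 5 * \<epsilon> / (18 * real q)"
      proof -
        have "\<epsilon> * (18 * real q^3) < 1" using eps qpos by (simp add: field_simps)
        then have "\<epsilon> * (18 * real q^3) * (5 * \<epsilon> / (18 * real q)) < 1 * (5 * \<epsilon> / (18 * real q))"
          using eps qpos by (intro mult_strict_right_mono) auto
        then show ?thesis using qpos by (simp add: power_def field_simps)
      qed
      have "\<epsilon> / real q < 5 * \<epsilon> / (18 * real q) + \<epsilon> / (8 * real q) + \<epsilon> / (4 * real q)"
        using H2 f1 f2 f3 by linarith
      also have "\<dots> = (47/72) * (\<epsilon> / real q)" by (simp add: field_simps)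
      finally show False using eps qpos by (simp add: field_simps)
    qed
    show "fvar q l v (Suc i) \<ge> fvar q l v i + 1/32 * \<epsilon>\<^sup>2 / real q ^ 4"
      using Wd Wb by (simp add: field_simps)
  qed
qed

end
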